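(* For $x\in(0,\pi/2)$, \begin{align*} \cos^{1/3}x&<\left(1-\tfrac8{15}\ln(\cos x)\right)^{-5/8}<\left(\tfrac83-\tfrac53\cos^{1/5}x\right)^{-1}<\exp\left(\tfrac58\cos^{8/15}x-\tfrac58\right)\\ &<\left(\tfrac5{21}\cos^{7/10}x+\tfrac{16}{21}\right)^2<\left(\tfrac13\cos^{4/5}x+\tfrac23\right)^{5/4}<\tfrac5{13}\cos^{13/15}x+\tfrac8{13}\\ &<\left(\tfrac{23}{51}\cos^{34/35}x+\tfrac{28}{51}\right)^{35/46}<\frac{\sin x}{x}<\left(\tfrac7{15}\cos x+\tfrac8{15}\right)^{5/7}<\sqrt{\tfrac59\cos^{6/5}x+\tfrac49}<\frac{2+\cos x}{3}. \end{align*} *)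

theory Defs
  imports Complex_Main
begin

end

theory Submission
  imports Defs
begin


lemma ln1p_less: fixes y::real assumes "0 < y" shows "ln (1+y) < y"
proof -
  have "1 + y < (1+y/2)^2" using assms by (simp add: power2_eq_square field_simps)
  hence "ln (1+y) < ln ((1+y/2)^2)" using assms by (intro ln_less_cancel_iff[THEN iffD2]) auto
  also have "\<dots> = 2 * ln (1+y/2)" using assms by (simp add: ln_realpow)
  also have "\<dots> \<le> 2*(y/2)" using ln_add_one_self_le_self[of "y/2"] assms by simp
  finally show ?thesis by simp
qed

lemma dec_to_1:
  fixes h h' :: "real \<Rightarrow> real"
  assumes "0 < u" "u < 1"
    and D: "\<And>v. u \<le> v \<Longrightarrow> v \<le> 1 \<Longrightarrow> (h has_real_derivative h' v) (at v)"
    and N: "\<And>v. u < v \<Longrightarrow> v < 1 \<Longrightarrow> h' v < 0"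
  shows "h 1 < h u"
proof (rule DERIV_neg_imp_decreasing_open[OF \<open>u<1\<close>])
  fix v assume "u < v" "v < 1" thus "\<exists>y. DERIV h v :> y \<and> y < 0" using D[of v] N[of v] by (intro exI[of _ "h' v"]) auto
next
  show "continuous_on {u..1} h"
    by (rule continuous_at_imp_continuous_on) (meson D DERIV_isCont atLeastAtMost_iff)
qed

lemma amgm:
  fixes u :: real and k m :: nat
  assumes "0 < u" "u < 1" "0 < k" "k < m"
  shows "real m * u^k < real k * u^m + (real m - real k)"
proof -
  have "(\<lambda>v. real k * v^m - real m * v^k) 1 < (\<lambda>v. real k * v^m - real m * v^k) u"
  proof (rule dec_to_1[OF assms(1,2)])
    fix v :: real assume "u \<le> v" "v \<le> 1"
    show "((\<lambda>v. real k * v^m - real m * v^k) has_real_derivative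
       (real k * (real m * v^(m-1)) - real m * (real k * v^(k-1)))) (at v)"
      by (auto intro!: derivative_eq_intros)
  next
    fix v :: real assume "u < v" "v < 1"
    hence "v^(m-1) < v^(k-1)" using assms \<open>u<v\<close> by (intro power_strict_decreasing) auto
    thus "real k * (real m * v^(m-1)) - real m * (real k * v^(k-1)) < 0"
      using assms by (simp add: algebra_simps)
  qed
  thus ?thesis by simp
qed

lemma key:
  fixes u a b d e q r :: real and k m :: nat
  assumes "0<u" "u<1" "0<a" "0<b" "a+b=1" "0<d" "0<e" "d+e=1"
   and H: "\<And>v. u<v \<Longrightarrow> v<1 \<Longrightarrow> q*a*k*v^(k-1)*(d*v^m+e) < r*d*m*v^(m-1)*(a*v^k+b)"
  shows "r * ln (d*u^m+e) < q * ln (a*u^k+b)"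
proof -
  let ?h = "\<lambda>v. q * ln (a*v^k+b) - r * ln (d*v^m+e)"
  have "?h 1 < ?h u"
  proof (rule dec_to_1[OF assms(1,2)])
    fix v :: real assume "u \<le> v" "v \<le> 1"
    hence p1: "a*v^k+b > 0" and p2: "d*v^m+e > 0" using assms by (auto intro: add_nonneg_pos)
    show "(?h has_real_derivative
       (q*(a*k*v^(k-1))/(a*v^k+b) - r*(d*m*v^(m-1))/(d*v^m+e))) (at v)"
      using p1 p2 by (auto intro!: derivative_eq_intros simp: field_simps)
  next
    fix v :: real assume "u < v" "v < 1"
    hence p1: "a*v^k+b > 0" and p2: "d*v^m+e > 0" using assms by (auto intro: add_nonneg_pos)
    have "q*(a*k*v^(k-1))/(a*v^k+b) < r*(d*m*v^(m-1))/(d*v^m+e)"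
      using H[OF \<open>u<v\<close> \<open>v<1\<close>] p1 p2 by (simp add: divide_simps mult_ac)
    thus "q*(a*k*v^(k-1))/(a*v^k+b) - r*(d*m*v^(m-1))/(d*v^m+e) < 0" by simp
  qed
  thus ?thesis using assms by simp
qed


lemma cmp_powr: fixes A B q r :: real
  assumes "0<A" "0<B" "q*ln A < r*ln B" shows "A powr q < B powr r"
  using assms by (simp add: powr_def)

lemma rp: fixes c a :: real assumes "0 < c" shows "(c powr a)^k = c powr (a * real k)"
  using assms by (simp add: powr_realpow[symmetric] powr_powr)

lemma root_bounds: fixes c a :: real assumes "0<c" "c<1" "0<a" shows "0 < c powr a" "c powr a < 1"
  using assms powr_less_mono2[of a c 1] by auto

lemma p5: fixes c :: real assumes "0<c" "c<1"
  shows "(5/21 * c powr (7/10) + 16/21) ^ 2 < (1/3 * c powr (4/5) + 2/3) powr (5/4)"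
proof -
  define u where "u = c powr (1/10)"
  have u: "0<u" "u<1" using root_bounds[OF assms, of "1/10"] by (auto simp: u_def)
  have e7: "c powr (7/10) = u^7" and e8: "c powr (4/5) = u^8" using assms by (simp_all add: u_def rp)
  have "2 * ln (5/21*u^7+16/21) < 5/4 * ln (1/3*u^8+2/3)"
  proof (rule key[where k=8 and m=7, OF u])
    fix v :: real assume v: "u<v" "v<1"
    hence "real 8 * v^1 < real 1 * v^8 + (real 8 - real 1)" using u by (intro amgm) auto
    hence a: "0 < v^8 + 7 - 8*v" by simp
    have "2*(5/21)*real 7*v^(7-1)*(1/3*v^8+2/3) - 5/4*(1/3)*real 8*v^(8-1)*(5/21*v^7+16/21)
       = 20/63 * v^6 * (v^8 + 7 - 8*v)" by (simp add: algebra_simps flip: power_Suc power_add)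
    moreover have "0 < 20/63 * v^6 * (v^8 + 7 - 8*v)" using a v u by simp
    ultimately show "5/4*(1/3)*real 8*v^(8-1)*(5/21*v^7+16/21) < 2*(5/21)*real 7*v^(7-1)*(1/3*v^8+2/3)"
      by linarith
  qed auto
  hence "(5/21*u^7+16/21) powr 2 < (1/3*u^8+2/3) powr (5/4)" using u by (intro cmp_powr) (auto intro!: add_nonneg_pos)
  thus ?thesis using u by (simp add: e7 e8)
qed


lemma p6: fixes c :: real assumes "0<c" "c<1"
  shows "(1/3 * c powr (4/5) + 2/3) powr (5/4) < 5/13 * c powr (13/15) + 8/13"
proof -
  define u where "u = c powr (1/15)"
  have u: "0<u" "u<1" using root_bounds[OF assms, of "1/15"] by (auto simp: u_def)
  have e1: "c powr (4/5) = u^12" and e2: "c powr (13/15) = u^13" using assms by (simp_all add: u_def rp)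
  have "5/4 * ln (1/3*u^12+2/3) < 1 * ln (5/13*u^13+8/13)"
  proof (rule key[where k=13 and m=12, OF u])
    fix v :: real assume v: "u<v" "v<1"
    hence "real 13 * v^1 < real 1 * v^13 + (real 13 - real 1)" using u by (intro amgm) auto
    hence a: "0 < v^13 + 12 - 13*v" by simp
    have "5/4*(1/3)*real 12*v^(12-1)*(5/13*v^13+8/13) - 1*(5/13)*real 13*v^(13-1)*(1/3*v^12+2/3)
       = 10/39 * v^11 * (v^13 + 12 - 13*v)" by (simp add: algebra_simps flip: power_Suc power_add)
    moreover have "0 < 10/39 * v^11 * (v^13 + 12 - 13*v)" using a v u by simp
    ultimately show "1*(5/13)*real 13*v^(13-1)*(1/3*v^12+2/3) < 5/4*(1/3)*real 12*v^(12-1)*(5/13*v^13+8/13)"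
      by linarith
  qed auto
  hence "(1/3*u^12+2/3) powr (5/4) < (5/13*u^13+8/13) powr 1" using u by (intro cmp_powr) (auto intro!: add_nonneg_pos)
  moreover have "0 < 5/13*u^13+8/13" using u by (auto intro!: add_nonneg_pos)
  ultimately show ?thesis using u by (simp add: e1 e2)
qed

lemma p7: fixes c :: real assumes "0<c" "c<1"
  shows "5/13 * c powr (13/15) + 8/13 < (23/51 * c powr (34/35) + 28/51) powr (35/46)"
proof -
  define u where "u = c powr (1/105)"
  have u: "0<u" "u<1" using root_bounds[OF assms, of "1/105"] by (auto simp: u_def)
  have e1: "c powr (13/15) = u^91" and e2: "c powr (34/35) = u^102" using assms by (simp_all add: u_def rp)
  have "1 * ln (5/13*u^91+8/13) < 35/46 * ln (23/51*u^102+28/51)"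
  proof (rule key[where k=102 and m=91, OF u])
    fix v :: real assume v: "u<v" "v<1"
    hence "real 102 * v^11 < real 11 * v^102 + (real 102 - real 11)" using u by (intro amgm) auto
    hence a: "0 < 11*v^102 + 91 - 102*v^11" by simp
    have "1*(5/13)*real 91*v^(91-1)*(23/51*v^102+28/51) - 35/46*(23/51)*real 102*v^(102-1)*(5/13*v^91+8/13)
       = 140/663 * v^90 * (11*v^102 + 91 - 102*v^11)" by (simp add: algebra_simps flip: power_Suc power_add)
    moreover have "0 < 140/663 * v^90 * (11*v^102 + 91 - 102*v^11)" using a v u by simp
    ultimately show "35/46*(23/51)*real 102*v^(102-1)*(5/13*v^91+8/13) < 1*(5/13)*real 91*v^(91-1)*(23/51*v^102+28/51)"
      by linarith
  qed auto
  hence "(5/13*u^91+8/13) powr 1 < (23/51*u^102+28/51) powr (35/46)" using u by (intro cmp_powr) (auto intro!: add_nonneg_pos)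
  moreover have "0 < 5/13*u^91+8/13" using u by (auto intro!: add_nonneg_pos)
  ultimately show ?thesis using u by (simp add: e1 e2)
qed

lemma p10: fixes c :: real assumes "0<c" "c<1"
  shows "(7/15 * c + 8/15) powr (5/7) < sqrt (5/9 * c powr (6/5) + 4/9)"
proof -
  define u where "u = c powr (1/5)"
  have u: "0<u" "u<1" using root_bounds[OF assms, of "1/5"] by (auto simp: u_def)
  have e1: "c = u^5" and e2: "c powr (6/5) = u^6" using assms by (simp_all add: u_def rp)
  have "5/7 * ln (7/15*u^5+8/15) < 1/2 * ln (5/9*u^6+4/9)"
  proof (rule key[where k=6 and m=5, OF u])
    fix v :: real assume v: "u<v" "v<1"
    hence "real 6 * v^1 < real 1 * v^6 + (real 6 - real 1)" using u by (intro amgm) auto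
    hence a: "0 < v^6 + 5 - 6*v" by simp
    have "5/7*(7/15)*real 5*v^(5-1)*(5/9*v^6+4/9) - 1/2*(5/9)*real 6*v^(6-1)*(7/15*v^5+8/15)
       = 4/27 * v^4 * (v^6 + 5 - 6*v)" by (simp add: algebra_simps flip: power_Suc power_add)
    moreover have "0 < 4/27 * v^4 * (v^6 + 5 - 6*v)" using a v u by simp
    ultimately show "1/2*(5/9)*real 6*v^(6-1)*(7/15*v^5+8/15) < 5/7*(7/15)*real 5*v^(5-1)*(5/9*v^6+4/9)"
      by linarith
  qed auto
  hence "(7/15*u^5+8/15) powr (5/7) < (5/9*u^6+4/9) powr (1/2)" using u by (intro cmp_powr) (auto intro!: add_nonneg_pos)
  moreover have "0 < 5/9*u^6+4/9" using u by (auto intro!: add_nonneg_pos)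
  ultimately have "(7/15*u^5+8/15) powr (5/7) < sqrt (5/9*u^6+4/9)" by (simp add: powr_half_sqrt)
  thus ?thesis unfolding e2 by (subst e1) simp
qed

lemma p11: fixes c :: real assumes "0<c" "c<1"
  shows "sqrt (5/9 * c powr (6/5) + 4/9) < (2 + c) / 3"
proof -
  define u where "u = c powr (1/5)"
  have u: "0<u" "u<1" using root_bounds[OF assms, of "1/5"] by (auto simp: u_def)
  have e1: "c = u^5" and e2: "c powr (6/5) = u^6" using assms by (simp_all add: u_def rp)
  have "real 5 * u^1 < real 1 * u^5 + (real 5 - real 1)" using u by (intro amgm) auto
  hence a: "0 < u^5 + 4 - 5*u" by simp
  have "(2+u^5)^2 - (5*u^6+4) = u^5 * (u^5 + 4 - 5*u)" by algebra
  moreover have "0 < u^5 * (u^5 + 4 - 5*u)" using a u by simp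
  ultimately have "5*u^6+4 < (2+u^5)^2" by linarith
  hence "5/9*u^6+4/9 < ((2+u^5)/3)^2" by (simp add: power_divide)
  hence "sqrt (5/9*u^6+4/9) < sqrt (((2+u^5)/3)^2)" by (intro real_sqrt_less_mono)
  also have "\<dots> = (2+u^5)/3" using u by simp
  finally show ?thesis unfolding e2 by (subst e1) simp
qed


lemma exp2: fixes A :: real assumes "0 < A" shows "exp (2 * ln A) = A^2"
  using ln_realpow[of A 2] assms by (metis exp_ln of_nat_numeral zero_less_power)

lemma p1: fixes c :: real assumes "0<c" "c<1"
  shows "c powr (1/3) < (1 - 8/15 * ln c) powr (-5/8)"
proof -
  have L: "ln c < 0" using assms by simp
  define y where "y = -8/15 * ln c"
  have y: "0 < y" using L by (simp add: y_def)
  have "ln (1+y) < y" by (rule ln1p_less[OF y])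
  hence "1/3 * ln c < -5/8 * ln (1 - 8/15 * ln c)" by (simp add: y_def)
  moreover have "0 < 1 - 8/15 * ln c" using L by simp
  ultimately show ?thesis using assms by (simp add: powr_def)
qed

lemma p2: fixes c :: real assumes "0<c" "c<1"
  shows "(1 - 8/15 * ln c) powr (-5/8) < inverse (8/3 - 5/3 * c powr (1/5))"
proof -
  define u where "u = c powr (1/5)"
  have u: "0<u" "u<1" using root_bounds[OF assms, of "1/5"] by (auto simp: u_def)
  have lu: "ln c = 5 * ln u" by (simp add: u_def)
  let ?h = "\<lambda>v. 5/8 * ln (1 - 8/3 * ln v) - ln (8/3 - 5/3 * v)"
  let ?d = "\<lambda>v. 5/8 * ((-(8/3)/v) / (1 - 8/3 * ln v)) - (-(5/3)) / (8/3 - 5/3 * v)"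
  have "?h 1 < ?h u"
  proof (rule dec_to_1[OF u])
    fix v :: real assume v: "u \<le> v" "v \<le> 1"
    hence "0 < v" using u by simp
    have "ln v \<le> 0" using \<open>0<v\<close> v by simp
    hence p1: "0 < 1 - 8/3 * ln v" and p2: "0 < 8/3 - 5/3 * v" using v by auto
    have d1: "((\<lambda>v. ln (1 - 8/3 * ln v)) has_real_derivative ((-(8/3)/v) / (1 - 8/3 * ln v))) (at v)"
      using p1 \<open>0<v\<close> by (auto intro!: derivative_eq_intros simp: field_simps)
    have d2: "((\<lambda>v. ln (8/3 - 5/3 * v)) has_real_derivative ((-(5/3)) / (8/3 - 5/3 * v))) (at v)"
      using p2 by (auto intro!: derivative_eq_intros simp: field_simps)
    show "(?h has_real_derivative ?d v) (at v)"
      by (intro DERIV_diff DERIV_cmult d1 d2)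
  next
    fix v :: real assume v: "u < v" "v < 1"
    hence v0: "0 < v" using u by simp
    have "ln v \<le> 0" using v0 v by simp
    hence p1: "0 < 1 - 8/3 * ln v" and p2: "0 < 8/3 - 5/3 * v" using v by auto
    have "ln (1 + (1/v - 1)) < 1/v - 1" using v v0 by (intro ln1p_less) (simp add: field_simps)
    hence "- ln v < 1/v - 1" using v0 by (simp add: ln_div)
    hence "- v * ln v < 1 - v" using v0 by (simp add: field_simps)
    hence lt: "v * (1 - 8/3 * ln v) < 8/3 - 5/3 * v" by (simp add: algebra_simps)
    have "(5/3) / (8/3 - 5/3 * v) < (5/3) / (v * (1 - 8/3 * ln v))"
      using p1 p2 v0 lt by (intro divide_strict_left_mono) (auto intro: mult_pos_pos)
    moreover have "5/8 * ((-(8/3)/v) / (1 - 8/3 * ln v)) = - ((5/3) / (v * (1 - 8/3 * ln v)))"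
      by simp
    ultimately show "?d v < 0" by simp
  qed
  hence m: "ln (8/3 - 5/3 * u) < 5/8 * ln (1 - 8/3 * ln u)" by simp
  have lu0: "ln u < 0" using u by simp
  have "0 < 1 - 8/3 * ln u" "0 < 8/3 - 5/3 * u" using u lu0 by linarith+
  hence e1: "(1 - 8/3 * ln u) powr (-5/8) = exp (-5/8 * ln (1 - 8/3 * ln u))"
    and e2: "inverse (8/3 - 5/3 * u) = exp (- ln (8/3 - 5/3 * u))"
    by (simp_all add: powr_def exp_minus)
  have "(1 - 8/3 * ln u) powr (-5/8) < inverse (8/3 - 5/3 * u)"
    unfolding e1 e2 using m by simp
  moreover have "1 - 8/15 * ln c = 1 - 8/3 * ln u" by (simp add: lu)
  ultimately show ?thesis by (simp add: u_def)
qed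

lemma p3: fixes c :: real assumes "0<c" "c<1"
  shows "inverse (8/3 - 5/3 * c powr (1/5)) < exp (5/8 * c powr (8/15) - 5/8)"
proof -
  define u where "u = c powr (1/15)"
  have u: "0<u" "u<1" using root_bounds[OF assms, of "1/15"] by (auto simp: u_def)
  have e1: "c powr (1/5) = u^3" and e2: "c powr (8/15) = u^8" using assms by (simp_all add: u_def rp)
  let ?h = "\<lambda>v. 5/8 * (v^8 - 1) + ln (8/3 - 5/3 * v^3)"
  have "?h 1 < ?h u"
  proof (rule dec_to_1[OF u])
    fix v :: real assume v: "u \<le> v" "v \<le> 1"
    hence v0: "0 < v" using u by simp
    have "v^3 \<le> 1" using v v0 by (simp add: power_le_one)
    hence p2: "0 < 8/3 - 5/3 * v^3" by simp
    show "(?h has_real_derivative (5 * v^7 - 5 * v^2 / (8/3 - 5/3 * v^3))) (at v)"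
      using p2 v0 by (auto intro!: derivative_eq_intros simp: field_simps)
  next
    fix v :: real assume v: "u < v" "v < 1"
    hence v0: "0 < v" using u by simp
    have "v^3 \<le> 1" using v v0 by (simp add: power_le_one)
    hence p2: "0 < 8/3 - 5/3 * v^3" by simp
    have "real 8 * v^5 < real 5 * v^8 + (real 8 - real 5)" using v v0 by (intro amgm) auto
    hence a: "0 < 5*v^8 + 3 - 8*v^5" by simp
    have "5 * v^2 - 5 * v^7 * (8/3 - 5/3 * v^3) = 5/3 * v^2 * (5*v^8 + 3 - 8*v^5)"
      by (simp add: algebra_simps flip: power_Suc power_add)
    moreover have "0 < 5/3 * v^2 * (5*v^8 + 3 - 8*v^5)" using a v0 by simp
    ultimately have "5 * v^7 * (8/3 - 5/3 * v^3) < 5 * v^2" by linarith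
    hence "5 * v^7 < 5 * v^2 / (8/3 - 5/3 * v^3)" using p2 by (simp add: field_simps)
    thus "5 * v^7 - 5 * v^2 / (8/3 - 5/3 * v^3) < 0" by simp
  qed
  hence "- ln (8/3 - 5/3 * u^3) < 5/8 * u^8 - 5/8" by (auto simp: field_simps)
  hence "exp (- ln (8/3 - 5/3 * u^3)) < exp (5/8 * u^8 - 5/8)" by simp
  moreover have "u^3 \<le> 1" using u by (simp add: power_le_one)
  hence "0 < 8/3 - 5/3 * u^3" by simp
  ultimately show ?thesis by (simp add: e1 e2 exp_minus)
qed

lemma p4: fixes c :: real assumes "0<c" "c<1"
  shows "exp (5/8 * c powr (8/15) - 5/8) < (5/21 * c powr (7/10) + 16/21) ^ 2"
proof -
  define u where "u = c powr (1/30)"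
  have u: "0<u" "u<1" using root_bounds[OF assms, of "1/30"] by (auto simp: u_def)
  have e1: "c powr (8/15) = u^16" and e2: "c powr (7/10) = u^21" using assms by (simp_all add: u_def rp)
  let ?h = "\<lambda>v. 2 * ln (5/21*v^21 + 16/21) - 5/8 * (v^16 - 1)"
  have "?h 1 < ?h u"
  proof (rule dec_to_1[OF u])
    fix v :: real assume v: "u \<le> v" "v \<le> 1"
    hence v0: "0 < v" using u by simp
    have p2: "0 < 5/21*v^21 + 16/21" using v0 by (auto intro!: add_nonneg_pos)
    show "(?h has_real_derivative (10 * v^20 / (5/21*v^21 + 16/21) - 10 * v^15)) (at v)"
      using p2 v0 by (auto intro!: derivative_eq_intros simp: field_simps)
  next
    fix v :: real assume v: "u < v" "v < 1"
    hence v0: "0 < v" using u by simp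
    have p2: "0 < 5/21*v^21 + 16/21" using v0 by (auto intro!: add_nonneg_pos)
    have "real 21 * v^5 < real 5 * v^21 + (real 21 - real 5)" using v v0 by (intro amgm) auto
    hence a: "0 < 5*v^21 + 16 - 21*v^5" by simp
    have "10 * v^15 * (5/21*v^21 + 16/21) - 10 * v^20 = 10/21 * v^15 * (5*v^21 + 16 - 21*v^5)"
      by (simp add: algebra_simps flip: power_Suc power_add)
    moreover have "0 < 10/21 * v^15 * (5*v^21 + 16 - 21*v^5)" using a v0 by simp
    ultimately have "10 * v^20 < 10 * v^15 * (5/21*v^21 + 16/21)" by linarith
    hence "10 * v^20 / (5/21*v^21 + 16/21) < 10 * v^15" using p2 by (simp add: field_simps)
    thus "10 * v^20 / (5/21*v^21 + 16/21) - 10 * v^15 < 0" by simp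
  qed
  hence "5/8 * u^16 - 5/8 < 2 * ln (5/21*u^21 + 16/21)" by (simp add: algebra_simps)
  hence lt: "exp (5/8 * u^16 - 5/8) < exp (2 * ln (5/21*u^21 + 16/21))" by simp
  have "0 < 5/21*u^21 + 16/21" using u by (auto intro!: add_nonneg_pos)
  hence eq: "exp (2 * ln (5/21*u^21 + 16/21)) = (5/21*u^21 + 16/21)^2" using exp2 by blast
  from lt have "exp (5/8 * u^16 - 5/8) < (5/21*u^21 + 16/21)^2" unfolding eq .
  thus ?thesis by (simp only: e1 e2)
qed


lemma inc_from_0:
  fixes F F' :: "real \<Rightarrow> real"
  assumes x: "0 < x" and lim: "(F \<longlongrightarrow> 0) (at_right 0)"
    and D: "\<And>y. 0 < y \<Longrightarrow> y \<le> x \<Longrightarrow> (F has_real_derivative F' y) (at y)"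
    and P: "\<And>y. 0 < y \<Longrightarrow> y < x \<Longrightarrow> 0 < F' y"
  shows "0 < F x"
proof -
  have inc: "F a < F b" if "0 < a" "a < b" "b \<le> x" for a b
  proof (rule DERIV_pos_imp_increasing_open[OF \<open>a<b\<close>])
    fix y assume "a < y" "y < b" thus "\<exists>z. DERIV F y :> z \<and> z > 0"
      using D[of y] P[of y] that by (intro exI[of _ "F' y"]) auto
  next
    show "continuous_on {a..b} F"
    proof (rule continuous_at_imp_continuous_on, intro ballI)
      fix y assume "y \<in> {a..b}"
      thus "isCont F y" using D[of y] that by (auto intro: DERIV_isCont)
    qed
  qed
  have "eventually (\<lambda>y. F y \<le> F (x/2)) (at_right 0)"
    unfolding eventually_at_right_field using x inc
    by (intro exI[of _ "x/2"]) (auto intro: less_imp_le)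
  hence "0 \<le> F (x/2)" by (rule tendsto_upperbound[OF lim]) simp
  also have "F (x/2) < F x" using inc[of "x/2" x] x by simp
  finally show ?thesis .
qed

lemma sin_div_lim: "((\<lambda>y::real. ln (sin y / y)) \<longlongrightarrow> 0) (at_right 0)"
proof -
  have "((\<lambda>x. sin x / x::real) \<longlongrightarrow> 1) (at 0)"
    using DERIV_sin [of 0] by (auto simp add: has_field_derivative_def field_has_derivative_at)
  hence "((\<lambda>x. sin x / x::real) \<longlongrightarrow> 1) (at_right 0)"
    by (rule tendsto_mono[OF at_le[OF subset_UNIV]])
  from tendsto_ln[OF this] show ?thesis by simp
qed

lemma g2_bound: fixes y :: real assumes "0 < y" "y < pi/2"
  shows "y < sin y * (7 * cos y + 8) / (2 * (cos y)^2 + 8 * cos y + 5)"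
proof -
  let ?g = "\<lambda>y::real. sin y * (7 * cos y + 8) / (2 * (cos y)^2 + 8 * cos y + 5)"
  let ?d = "\<lambda>y::real. (cos y * (7 * cos y + 8) * (2 * (cos y)^2 + 8 * cos y + 5)
       - (sin y)^2 * (7 * (2 * (cos y)^2 + 8 * cos y + 5) - (7 * cos y + 8) * (4 * cos y + 8)))
       / (2 * (cos y)^2 + 8 * cos y + 5)^2"
  have "0 < ?g y - y"
  proof (rule inc_from_0[where F="\<lambda>y. ?g y - y" and F'="\<lambda>y. ?d y - 1", OF assms(1)])
    have "((\<lambda>y. ?g y - y) \<longlongrightarrow> ?g 0 - 0) (at_right 0)"
      by (intro tendsto_intros) auto
    thus "((\<lambda>y. ?g y - y) \<longlongrightarrow> 0) (at_right 0)" by simp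
  next
    fix z :: real assume z: "0 < z" "z \<le> y"
    hence "0 < cos z" using assms by (intro cos_gt_zero) auto
    hence Dp: "0 < 2 * (cos z)^2 + 8 * cos z + 5" by (auto intro!: add_nonneg_pos)
    show "((\<lambda>y. ?g y - y) has_real_derivative (?d z - 1)) (at z)"
      using Dp by (auto intro!: derivative_eq_intros simp: field_simps power2_eq_square)
  next
    fix z :: real assume z: "0 < z" "z < y"
    hence c0: "0 < cos z" using assms by (auto intro!: cos_gt_zero)
    have c1: "cos z < 1" using cos_monotone_0_pi[of 0 z] z assms by simp
    have Dp: "0 < 2 * (cos z)^2 + 8 * cos z + 5" using c0 by (auto intro!: add_nonneg_pos)
    have "(cos z * (7 * cos z + 8) * (2 * (cos z)^2 + 8 * cos z + 5)
       - (sin z)^2 * (7 * (2 * (cos z)^2 + 8 * cos z + 5) - (7 * cos z + 8) * (4 * cos z + 8)))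
       - (2 * (cos z)^2 + 8 * cos z + 5)^2 = 4 * (1 - cos z)^3 * (1 + cos z)"
      unfolding sin_squared_eq by algebra
    moreover have "0 < 4 * (1 - cos z)^3 * (1 + cos z)" using c0 c1 by simp
    ultimately have "0 < ?d z - 1" using Dp by (simp add: field_simps)
    thus "0 < ?d z - 1" .
  qed
  thus ?thesis by simp
qed


lemma p9: fixes x :: real assumes "0 < x" "x < pi/2"
  shows "sin x / x < (7/15 * cos x + 8/15) powr (5/7)"
proof -
  let ?F = "\<lambda>y::real. 5/7 * ln (7/15 * cos y + 8/15) - ln (sin y / y)"
  let ?d = "\<lambda>y::real. - 5 * sin y / (7 * cos y + 8) - (cos y / sin y - 1/y)"
  have "0 < ?F x"
  proof (rule inc_from_0[where F="?F" and F'="?d", OF assms(1)])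
    have "((\<lambda>y::real. 5/7 * ln (7/15 * cos y + 8/15)) \<longlongrightarrow> 5/7 * ln (7/15 * cos 0 + 8/15)) (at_right 0)"
      by (intro tendsto_intros) auto
    from tendsto_diff[OF this sin_div_lim] show "(?F \<longlongrightarrow> 0) (at_right 0)" by simp
  next
    fix z :: real assume z: "0 < z" "z \<le> x"
    hence c0: "0 < cos z" and s0: "0 < sin z" using assms by (auto intro!: cos_gt_zero sin_gt_zero2)
    have p: "0 < 7/15 * cos z + 8/15" "7 * cos z + 8 \<noteq> 0" using c0 by simp_all
    have d1: "((\<lambda>y. 5/7 * ln (7/15 * cos y + 8/15)) has_real_derivative (- 5 * sin z / (7 * cos z + 8))) (at z)"
      using p by (auto intro!: derivative_eq_intros simp: field_simps)
    have d2: "((\<lambda>y. ln (sin y / y)) has_real_derivative (cos z / sin z - 1/z)) (at z)"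
      using c0 s0 z by (auto intro!: derivative_eq_intros simp: field_simps power2_eq_square)
    show "(?F has_real_derivative ?d z) (at z)" by (rule DERIV_diff[OF d1 d2])
  next
    fix z :: real assume z: "0 < z" "z < x"
    hence c0: "0 < cos z" and s0: "0 < sin z" using assms by (auto intro!: cos_gt_zero sin_gt_zero2)
    have Dp: "0 < 2 * (cos z)^2 + 8 * cos z + 5" using c0 by (auto intro!: add_nonneg_pos)
    have "z < sin z * (7 * cos z + 8) / (2 * (cos z)^2 + 8 * cos z + 5)"
      using z assms by (intro g2_bound) auto
    hence lt: "z * (2 * (cos z)^2 + 8 * cos z + 5) < sin z * (7 * cos z + 8)"
      using Dp by (simp add: field_simps)
    have id: "cos z * (7 * cos z + 8) + 5 * (sin z)^2 = 2 * (cos z)^2 + 8 * cos z + 5"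
      unfolding sin_squared_eq by algebra
    have "?d z = (sin z * (7 * cos z + 8) - z * (cos z * (7 * cos z + 8) + 5 * (sin z)^2)) / (z * sin z * (7 * cos z + 8))"
      using c0 s0 z by (simp add: field_simps power2_eq_square)
    also have "\<dots> = (sin z * (7 * cos z + 8) - z * (2 * (cos z)^2 + 8 * cos z + 5)) / (z * sin z * (7 * cos z + 8))"
      by (simp only: id)
    finally show "0 < ?d z" using lt c0 s0 z by simp
  qed
  hence lt: "ln (sin x / x) < 5/7 * ln (7/15 * cos x + 8/15)" by simp
  have s0: "0 < sin x" using assms by (intro sin_gt_zero2)
  have c0: "0 < cos x" using assms by (intro cos_gt_zero)
  have "sin x / x = exp (ln (sin x / x))" using s0 assms by simp
  also have "\<dots> < exp (5/7 * ln (7/15 * cos x + 8/15))" using lt by simp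
  also have "\<dots> = (7/15 * cos x + 8/15) powr (5/7)" using c0 by (simp add: powr_def)
  finally show ?thesis .
qed


lemma polyF: fixes u :: real assumes "0 < u" "u < 1"
  shows "0 < 17 + 850*u^17 - 980*u^18 + 158*u^35 - 45*u^52"
proof -
  have id: "17 + 850*u^17 - 980*u^18 + 158*u^35 - 45*u^52 = (1-u)^3 * (17 + 51*u + 102*u^2 + 170*u^3 + 255*u^4 + 357*u^5 + 476*u^6 + 612*u^7 + 765*u^8 + 935*u^9 + 1122*u^10 + 1326*u^11 + 1547*u^12 + 1785*u^13 + 2040*u^14 + 2312*u^15 + 2601*u^16 + 3757*u^17 + 4800*u^18 + 5730*u^19 + 6547*u^20 + 7251*u^21 + 7842*u^22 + 8320*u^23 + 8685*u^24 + 8937*u^25 + 9076*u^26 + 9102*u^27 + 9015*u^28 + 8815*u^29 + 8502*u^30 + 8076*u^31 + 7537*u^32 + 6885*u^33 + 6120*u^34 + 5400*u^35 + 4725*u^36 + 4095*u^37 + 3510*u^38 + 2970*u^39 + 2475*u^40 + 2025*u^41 + 1620*u^42 + 1260*u^43 + 945*u^44 + 675*u^45 + 450*u^46 + 270*u^47 + 135*u^48 + 45*u^49)"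
    by algebra
  have "0 < 17 + 51*u + 102*u^2 + 170*u^3 + 255*u^4 + 357*u^5 + 476*u^6 + 612*u^7 + 765*u^8 + 935*u^9 + 1122*u^10 + 1326*u^11 + 1547*u^12 + 1785*u^13 + 2040*u^14 + 2312*u^15 + 2601*u^16 + 3757*u^17 + 4800*u^18 + 5730*u^19 + 6547*u^20 + 7251*u^21 + 7842*u^22 + 8320*u^23 + 8685*u^24 + 8937*u^25 + 9076*u^26 + 9102*u^27 + 9015*u^28 + 8815*u^29 + 8502*u^30 + 8076*u^31 + 7537*u^32 + 6885*u^33 + 6120*u^34 + 5400*u^35 + 4725*u^36 + 4095*u^37 + 3510*u^38 + 2970*u^39 + 2475*u^40 + 2025*u^41 + 1620*u^42 + 1260*u^43 + 945*u^44 + 675*u^45 + 450*u^46 + 270*u^47 + 135*u^48 + 45*u^49"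
    using assms by (intro add_pos_nonneg) simp_all
  moreover have "0 < (1-u)^3" using assms by simp
  ultimately show ?thesis unfolding id by simp
qed

lemma polyK: fixes w :: real assumes "0 < w" "w < 1"
  shows "0 < 850*w^35 - 45*(w^35)^3 + 17*w + 158*(w^35)^2*w - 980*w^35*w^2"
proof -
  have "0 < 17 + 850*(w^2)^17 - 980*(w^2)^18 + 158*(w^2)^35 - 45*(w^2)^52"
    using assms by (intro polyF) (auto simp: power_less_one_iff)
  hence "0 < w * (17 + 850*(w^2)^17 - 980*(w^2)^18 + 158*(w^2)^35 - 45*(w^2)^52)"
    using assms by simp
  also have "\<dots> = 850*w^35 - 45*(w^35)^3 + 17*w + 158*(w^35)^2*w - 980*w^35*w^2"
    by algebra
  finally show ?thesis .
qed


lemma g8_bound: fixes y :: real assumes y: "0 < y" "y < pi/2"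
  shows "sin y * (23*cos y + 28*exp (ln (cos y)/35)) < y * (6*(cos y)^2 + 28*cos y*exp (ln (cos y)/35) + 17)"
proof -
  define w where "w = (\<lambda>y::real. exp (ln (cos y) / 35))"
  define num where "num = (\<lambda>y::real. sin y * (23*cos y + 28*w y))"
  define den where "den = (\<lambda>y::real. 6*(cos y)^2 + 28*cos y*w y + 17)"
  have dw: "(w has_real_derivative (- w z * sin z / (35 * cos z))) (at z)" if "0 < cos z" for z
    unfolding w_def using that by (auto intro!: derivative_eq_intros simp: field_simps)
  have denp: "0 < den z" if "0 < cos z" for z
    unfolding den_def w_def using that by (auto intro!: add_nonneg_pos)
  define Fd where "Fd = (\<lambda>z. 1 - ((cos z * (23*cos z + 28*w z) + sin z * (23*(- sin z) + 28*(- w z * sin z / (35 * cos z)))) * den z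
        - num z * (6*(2*cos z*(- sin z)) + 28*((- sin z)*w z + cos z*(- w z * sin z / (35 * cos z))))) / (den z * den z))"
  have "0 < (\<lambda>y. y - num y / den y) y"
  proof (rule inc_from_0[OF y(1), where F'="Fd"])
    have "((\<lambda>y. y - num y / den y) \<longlongrightarrow> 0 - num 0 / den 0) (at_right 0)"
      unfolding num_def den_def w_def by (intro tendsto_intros) auto
    thus "((\<lambda>y. y - num y / den y) \<longlongrightarrow> 0) (at_right 0)" by (simp add: num_def)
  next
    fix z :: real assume z: "0 < z" "z \<le> y"
    hence c0: "0 < cos z" using y by (intro cos_gt_zero) auto
    have dn: "(num has_real_derivative (cos z * (23*cos z + 28*w z) + sin z * (23*(- sin z) + 28*(- w z * sin z / (35 * cos z))))) (at z)"
      unfolding num_def using dw[OF c0] by (auto intro!: derivative_eq_intros)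
    have dd: "(den has_real_derivative (6*(2*cos z*(- sin z)) + 28*((- sin z)*w z + cos z*(- w z * sin z / (35 * cos z))))) (at z)"
      unfolding den_def using dw[OF c0]
      by (auto intro!: derivative_eq_intros simp: power2_eq_square)
    show "((\<lambda>y. y - num y / den y) has_real_derivative Fd z) (at z)"
      unfolding Fd_def by (intro DERIV_diff DERIV_ident DERIV_divide dn dd) (use denp[OF c0] in simp)
  next
    fix z :: real assume z: "0 < z" "z < y"
    hence c0: "0 < cos z" using y by (intro cos_gt_zero) auto
    have c1: "cos z < 1" using cos_monotone_0_pi[of 0 z] z y by simp
    define W where "W = w z"
    define wd where "wd = - W * sin z / (35 * cos z)"
    have wdf: "35 * cos z * wd = - W * sin z" using c0 by (simp add: wd_def)
    have W0: "0 < W" by (simp add: W_def w_def)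
    have W1: "W < 1" using c0 c1 by (simp add: W_def w_def)
    have ceq: "cos z = W^35" using c0 by (simp add: W_def w_def exp_of_nat_mult[symmetric])
    have K: "0 < 850*cos z - 45*(cos z)^3 + 17*W + 158*(cos z)^2*W - 980*cos z*W^2"
      using polyK[OF W0 W1] by (simp add: ceq)
    let ?X = "den z * den z - ((cos z * (23*cos z + 28*W) + sin z * (23*(- sin z) + 28*wd)) * den z
        - num z * (6*(2*cos z*(- sin z)) + 28*((- sin z)*W + cos z*wd)))"
    have "5 * cos z * ?X = 4 * (1 - (cos z)^2) * (850*cos z - 45*(cos z)^3 + 17*W + 158*(cos z)^2*W - 980*cos z*W^2)"
      using wdf sin_squared_eq[of z] unfolding num_def den_def W_def[symmetric] by algebra
    moreover have "0 < 4 * (1 - (cos z)^2) * (850*cos z - 45*(cos z)^3 + 17*W + 158*(cos z)^2*W - 980*cos z*W^2)"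
    proof -
      have "(cos z)^2 < 1" using c0 c1 by (simp add: abs_square_less_1)
      thus ?thesis using K by simp
    qed
    ultimately have "0 < (5 * cos z) * ?X" by simp
    hence "0 < ?X" by (rule zero_less_mult_pos) (use c0 in simp)
    show "0 < Fd z"
      unfolding Fd_def using \<open>0 < ?X\<close> denp[OF c0] unfolding wd_def W_def by (simp add: field_simps)
  qed
  hence "num y < y * den y" using denp[of y] cos_gt_zero[OF y] by (simp add: field_simps)
  thus ?thesis by (simp add: num_def den_def w_def)
qed


lemma p8: fixes x :: real assumes "0 < x" "x < pi/2"
  shows "(23/51 * cos x powr (34/35) + 28/51) powr (35/46) < sin x / x"
proof -
  define A where "A = (\<lambda>y::real. 23/51 * exp (34/35 * ln (cos y)) + 28/51)"
  define Ad where "Ad = (\<lambda>z::real. 23/51 * (exp (34/35 * ln (cos z)) * (34/35 * (- sin z / cos z))))"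
  let ?F = "\<lambda>y::real. ln (sin y / y) - 35/46 * ln (A y)"
  let ?d = "\<lambda>z::real. (cos z / sin z - 1/z) - 35/46 * (inverse (A z) * Ad z)"
  have Ap: "0 < A y" for y unfolding A_def by (auto intro!: add_nonneg_pos)
  have "0 < ?F x"
  proof (rule inc_from_0[where F="?F" and F'="?d", OF assms(1)])
    have "((\<lambda>y::real. 35/46 * ln (A y)) \<longlongrightarrow> 35/46 * ln (A 0)) (at_right 0)"
      unfolding A_def by (intro tendsto_intros) auto
    from tendsto_diff[OF sin_div_lim this] show "(?F \<longlongrightarrow> 0) (at_right 0)" by (simp add: A_def)
  next
    fix z :: real assume z: "0 < z" "z \<le> x"
    hence c0: "0 < cos z" and s0: "0 < sin z" using assms by (auto intro!: cos_gt_zero sin_gt_zero2)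
    have d2: "((\<lambda>y. ln (sin y / y)) has_real_derivative (cos z / sin z - 1/z)) (at z)"
      using c0 s0 z by (auto intro!: derivative_eq_intros simp: field_simps power2_eq_square)
    have dA: "(A has_real_derivative Ad z) (at z)"
      unfolding A_def Ad_def using c0 by (auto intro!: derivative_eq_intros simp: field_simps)
    have d3: "((\<lambda>y. 35/46 * ln (A y)) has_real_derivative (35/46 * (inverse (A z) * Ad z))) (at z)"
      by (intro DERIV_cmult DERIV_chain2[OF DERIV_ln dA] Ap)
    show "(?F has_real_derivative ?d z) (at z)" by (rule DERIV_diff[OF d2 d3])
  next
    fix z :: real assume z: "0 < z" "z < x"
    hence c0: "0 < cos z" and s0: "0 < sin z" using assms by (auto intro!: cos_gt_zero sin_gt_zero2)
    define W where "W = exp (ln (cos z) / 35)"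
    define e where "e = exp (34/35 * ln (cos z))"
    have W0: "0 < W" by (simp add: W_def)
    have ceq: "cos z = W^35" using c0 by (simp add: W_def exp_of_nat_mult[symmetric])
    have eeq: "e = W^34" using c0 by (simp add: W_def e_def exp_of_nat_mult[symmetric])
    define N where "N = 23 * cos z + 28 * W"
    define D where "D = 6*(cos z)^2 + 28*cos z*W + 17"
    have N0: "0 < N" using c0 W0 by (simp add: N_def)
    have e0: "0 < e" by (simp add: e_def)
    have lt: "sin z * N < z * D"
      using g8_bound[of z] z assms by (simp add: N_def D_def W_def)
    have ce: "cos z * (23 * e + 28) = e * N"
      unfolding N_def ceq eeq by (simp add: algebra_simps flip: power_add power_Suc)
    have Aeq: "A z = e * N / (51 * cos z)"
    proof -
      have "A z = (cos z * (23 * e + 28)) / (51 * cos z)" using c0 by (simp add: A_def e_def field_simps)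
      thus ?thesis unfolding ce .
    qed
    have Adeq: "Ad z = - (46/105) * e * sin z / cos z" by (simp add: Ad_def e_def)
    have "?d z = cos z / sin z - 1/z + 17 * sin z / N"
      unfolding Aeq Adeq using c0 e0 N0 by (simp add: field_simps)
    also have "\<dots> = (z * (cos z * N + 17 * (sin z)^2) - sin z * N) / (z * sin z * N)"
      using z s0 N0 by (simp add: field_simps power2_eq_square)
    also have "cos z * N + 17 * (sin z)^2 = D"
      unfolding N_def D_def sin_squared_eq by algebra
    finally show "0 < ?d z" using lt z s0 N0 by simp
  qed
  hence lt: "35/46 * ln (A x) < ln (sin x / x)" by simp
  have s0: "0 < sin x" using assms by (intro sin_gt_zero2)
  have c0: "0 < cos x" using assms by (intro cos_gt_zero)
  have "(23/51 * cos x powr (34/35) + 28/51) powr (35/46) = exp (35/46 * ln (A x))"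
    using c0 Ap[of x] by (simp add: powr_def A_def)
  also have "\<dots> < exp (ln (sin x / x))" using lt by simp
  also have "\<dots> = sin x / x" using s0 assms by simp
  finally show ?thesis .
qed


theorem corollary9:
  fixes x :: real
  assumes "0 < x" and "x < pi / 2"
  shows "cos x powr (1/3) < (1 - 8/15 * ln (cos x)) powr (-5/8)
    \<and> (1 - 8/15 * ln (cos x)) powr (-5/8) < inverse (8/3 - 5/3 * cos x powr (1/5))
    \<and> inverse (8/3 - 5/3 * cos x powr (1/5)) < exp (5/8 * cos x powr (8/15) - 5/8)
    \<and> exp (5/8 * cos x powr (8/15) - 5/8) < (5/21 * cos x powr (7/10) + 16/21) ^ 2
    \<and> (5/21 * cos x powr (7/10) + 16/21) ^ 2 < (1/3 * cos x powr (4/5) + 2/3) powr (5/4)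
    \<and> (1/3 * cos x powr (4/5) + 2/3) powr (5/4) < 5/13 * cos x powr (13/15) + 8/13
    \<and> 5/13 * cos x powr (13/15) + 8/13 < (23/51 * cos x powr (34/35) + 28/51) powr (35/46)
    \<and> (23/51 * cos x powr (34/35) + 28/51) powr (35/46) < sin x / x
    \<and> sin x / x < (7/15 * cos x + 8/15) powr (5/7)
    \<and> (7/15 * cos x + 8/15) powr (5/7) < sqrt (5/9 * cos x powr (6/5) + 4/9)
    \<and> sqrt (5/9 * cos x powr (6/5) + 4/9) < (2 + cos x) / 3"
  proof -
  have c0: "0 < cos x" using assms by (intro cos_gt_zero)
  have c1: "cos x < 1" using cos_monotone_0_pi[of 0 x] assms by simp
  show ?thesis
    using p1[OF c0 c1] p2[OF c0 c1] p3[OF c0 c1] p4[OF c0 c1] p5[OF c0 c1] p6[OF c0 c1]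
      p7[OF c0 c1] p8[OF assms] p9[OF assms] p10[OF c0 c1] p11[OF c0 c1]
    by blast
qed

end
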